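(* Let $R$ be a ring, let $T$ be a left denominator set of $R$ with $\mathrm{ass}(T)=0$, and let $\sigma:R\to T^{-1}R$, $r\mapsto\frac{r}{1}$. Then: (1) $T\subseteq S$ for all $S\in\max\mathrm{Den}_l(R)$; (2) the map $\max\mathrm{Den}_l(R)\to\max\mathrm{Den}_l(T^{-1}R)$, $S\mapsto\widetilde{S}$, is a bijection with inverse $\mathcal{T}\mapsto\sigma^{-1}(\mathcal{T})$, where $\widetilde{S}$ is the multiplicative monoid generated in $T^{-1}R$ by $\sigma(S)$ and $\{t^{-1}: t\in T\}$; moreover $S^{-1}R\cong\widetilde{S}^{-1}(T^{-1}R)$.
   Context: All rings are associative with $1$. A multiplicative subset $S$ of $R$ ($1\in S$, $0\notin S$, closed under multiplication) is a left Ore set if $Sr\cap Rs\neq\emptyset$ for all $r\in R$, $s\in S$; for it, $\mathrm{ass}(S):=\{r\in R: sr=0\text{ for some } s\in S\}$. A left Ore set $S$ is a left denominator set if $rs=0$ ($r\in R$, $s\in S$) implies $tr=0$ for some $t\in S$; $S^{-1}R$ is the left localization. $\max\mathrm{Den}_l(R)$ is the set of maximal elements, under inclusion, of the set of left denominator sets of $R$. *)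

theory Defs
  imports Main
begin

definition mult_subset :: "'a::ring_1 set \<Rightarrow> bool" where
  "mult_subset S \<longleftrightarrow> 1 \<in> S \<and> 0 \<notin> S \<and> (\<forall>a\<in>S. \<forall>b\<in>S. a * b \<in> S)"

definition left_ore :: "'a::ring_1 set \<Rightarrow> bool" where
  "left_ore S \<longleftrightarrow> mult_subset S \<and>
     (\<forall>r. \<forall>s\<in>S. \<exists>s'\<in>S. \<exists>r'. s' * r = r' * s)"

definition ass :: "'a::ring_1 set \<Rightarrow> 'a set" where
  "ass S = {r. \<exists>s\<in>S. s * r = 0}"

definition left_den :: "'a::ring_1 set \<Rightarrow> bool" where
  "left_den S \<longleftrightarrow> left_ore S \<and>
     (\<forall>r. \<forall>s\<in>S. r * s = 0 \<longrightarrow> (\<exists>t\<in>S. t * r = 0))"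

definition maxDen_l :: "'a::ring_1 set set" where
  "maxDen_l = {S. left_den S \<and> (\<forall>S'. left_den S' \<and> S \<subseteq> S' \<longrightarrow> S' = S)}"

definition is_ring_hom :: "('a::ring_1 \<Rightarrow> 'b::ring_1) \<Rightarrow> bool" where
  "is_ring_hom f \<longleftrightarrow> f 1 = 1 \<and> (\<forall>x y. f (x + y) = f x + f y) \<and> (\<forall>x y. f (x * y) = f x * f y)"

definition is_unit :: "'a::ring_1 \<Rightarrow> bool" where
  "is_unit u \<longleftrightarrow> (\<exists>v. v * u = 1 \<and> u * v = 1)"

text \<open>sigma : R -> Q is (a model of) the left localization S^{-1}R, r |-> r/1:
  a ring homomorphism sending S to units, every element of Q is a left fraction
  sigma(s)^{-1} sigma(r), and the kernel is ass(S).\<close>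
definition is_left_localization :: "'a::ring_1 set \<Rightarrow> ('a \<Rightarrow> 'b::ring_1) \<Rightarrow> bool" where
  "is_left_localization S \<sigma> \<longleftrightarrow> left_den S \<and> is_ring_hom \<sigma> \<and>
     (\<forall>s\<in>S. is_unit (\<sigma> s)) \<and>
     (\<forall>q. \<exists>s\<in>S. \<exists>r. \<sigma> s * q = \<sigma> r) \<and>
     {r. \<sigma> r = 0} = ass S"

inductive_set monoid_gen :: "'a::monoid_mult set \<Rightarrow> 'a set" for A where
  one: "1 \<in> monoid_gen A"
| gen: "a \<in> A \<Longrightarrow> a \<in> monoid_gen A"
| mult: "a \<in> monoid_gen A \<Longrightarrow> b \<in> monoid_gen A \<Longrightarrow> a * b \<in> monoid_gen A"

definition tilde :: "'a::ring_1 set \<Rightarrow> ('a \<Rightarrow> 'b::ring_1) \<Rightarrow> 'a set \<Rightarrow> 'b set" where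
  "tilde T \<sigma> S = monoid_gen (\<sigma> ` S \<union> {u. \<exists>t\<in>T. u * \<sigma> t = 1 \<and> \<sigma> t * u = 1})"

end

theory Submission
  imports Defs
begin


lemma ld_1: "left_den S \<Longrightarrow> 1 \<in> S" by (simp add: left_den_def left_ore_def mult_subset_def)
lemma ld_0: "left_den S \<Longrightarrow> 0 \<notin> S" by (simp add: left_den_def left_ore_def mult_subset_def)
lemma ld_mult: "left_den S \<Longrightarrow> a \<in> S \<Longrightarrow> b \<in> S \<Longrightarrow> a*b \<in> S"
  by (simp add: left_den_def left_ore_def mult_subset_def)
lemma ld_ore: "left_den S \<Longrightarrow> s \<in> S \<Longrightarrow> \<exists>s'\<in>S. \<exists>r'. s' * r = r' * s"
  by (simp add: left_den_def left_ore_def)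
lemma ld_den: "left_den S \<Longrightarrow> s \<in> S \<Longrightarrow> r * s = 0 \<Longrightarrow> \<exists>t\<in>S. t * r = 0"
  unfolding left_den_def by blast
lemma ld_intro:
  assumes "1 \<in> S" "0 \<notin> S" "\<And>a b. a\<in>S \<Longrightarrow> b\<in>S \<Longrightarrow> a*b\<in>S"
    "\<And>r s. s\<in>S \<Longrightarrow> \<exists>s'\<in>S. \<exists>r'. s'*r = r'*s"
    "\<And>r s. s\<in>S \<Longrightarrow> r*s=0 \<Longrightarrow> \<exists>t\<in>S. t*r=0"
  shows "left_den S"
  using assms by (simp add: left_den_def left_ore_def mult_subset_def)

lemma max_ld: "S \<in> maxDen_l \<Longrightarrow> left_den S" by (simp add: maxDen_l_def)
lemma max_eq: "S \<in> maxDen_l \<Longrightarrow> left_den S' \<Longrightarrow> S \<subseteq> S' \<Longrightarrow> S' = S"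
  by (simp add: maxDen_l_def)
lemma maxI: "left_den S \<Longrightarrow> (\<And>S'. left_den S' \<Longrightarrow> S \<subseteq> S' \<Longrightarrow> S' \<subseteq> S) \<Longrightarrow> S \<in> maxDen_l"
  unfolding maxDen_l_def by blast

lemma ass_right_reg:
  assumes S: "left_den S" and s: "s \<in> S" and x: "x * s \<in> ass S"
  shows "x \<in> ass S"
proof -
  from x obtain t where t: "t \<in> S" "t * (x * s) = 0" by (auto simp: ass_def)
  then have "(t*x) * s = 0" by (simp add: mult.assoc)
  then obtain t' where "t' \<in> S" "t' * (t * x) = 0" using ld_den[OF S s] by blast
  then show ?thesis using t ld_mult[OF S] unfolding ass_def
    by (metis (mono_tags, lifting) mem_Collect_eq mult.assoc)
qed

lemma ass_mult_right: "x \<in> ass S \<Longrightarrow> x * y \<in> ass S"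
  unfolding ass_def by (auto, metis mult.assoc mult_zero_left)

lemma one_notin_ass: "left_den S \<Longrightarrow> 1 \<notin> ass S"
  unfolding ass_def using ld_0 by fastforce

lemma zero_ass: "left_den S \<Longrightarrow> 0 \<in> ass S"
  unfolding ass_def using ld_1 by fastforce

lemma max_G:
  assumes M: "S \<in> maxDen_l"
    and i: "\<And>r. \<exists>s\<in>S. \<exists>r'. s*r = r'*a"
    and ii: "\<And>x. x*a \<in> ass S \<Longrightarrow> x \<in> ass S"
  shows "a \<in> S"
proof -
  define G where "G = {a. (\<forall>r. \<exists>s\<in>S. \<exists>r'. s*r = r'*a) \<and> (\<forall>x. x*a \<in> ass S \<longrightarrow> x \<in> ass S)}"
  have S: "left_den S" using M by (rule max_ld)
  have SG: "S \<subseteq> G" unfolding G_def using ld_ore[OF S] ass_right_reg[OF S] by blast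
  have "left_den G"
  proof (rule ld_intro)
    show "1 \<in> G" unfolding G_def by (auto intro: ld_1[OF S])
    show "0 \<notin> G"
    proof
      assume "0 \<in> G"
      then have "1 \<in> ass S" unfolding G_def using zero_ass[OF S] by auto
      then show False using one_notin_ass[OF S] by blast
    qed
  next
    fix a b assume a: "a \<in> G" and b: "b \<in> G"
    have "\<exists>s\<in>S. \<exists>r'. s*r = r'*(a*b)" for r
    proof -
      from b obtain s1 r1 where s1: "s1 \<in> S" "s1*r = r1*b" unfolding G_def by blast
      from a obtain s2 r2 where s2: "s2 \<in> S" "s2*r1 = r2*a" unfolding G_def by blast
      have "(s2*s1)*r = r2*(a*b)" using s1 s2 by (metis mult.assoc)
      then show ?thesis using ld_mult[OF S s2(1) s1(1)] by blast
    qed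
    moreover have "x*(a*b) \<in> ass S \<Longrightarrow> x \<in> ass S" for x
      using a b unfolding G_def by (metis (no_types, lifting) mem_Collect_eq mult.assoc)
    ultimately show "a*b \<in> G" unfolding G_def by blast
  next
    fix r s assume "s \<in> G"
    then obtain s' r' where "s' \<in> S" "s'*r = r'*s" unfolding G_def by blast
    then show "\<exists>s'\<in>G. \<exists>r'. s'*r = r'*s" using SG by blast
  next
    fix r s assume s: "s \<in> G" and "r*s = 0"
    then have "r*s \<in> ass S" using zero_ass[OF S] by simp
    then have "r \<in> ass S" using s unfolding G_def by blast
    then show "\<exists>t\<in>G. t*r = 0" using SG unfolding ass_def by blast
  qed
  then have "G = S" using max_eq[OF M] SG by blast
  moreover have "a \<in> G" unfolding G_def using i ii by blast
  ultimately show ?thesis by simp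
qed

lemma sat1:
  assumes M: "S \<in> maxDen_l" and b: "b \<in> S" and xb: "x*b \<in> S"
  shows "x \<in> S"
proof (rule max_G[OF M])
  have S: "left_den S" using M by (rule max_ld)
  fix r
  obtain s r' where s: "s \<in> S" "s*(r*b) = r'*(x*b)" using ld_ore[OF S xb] by blast
  then have "(s*r - r'*x)*b = 0" by (simp add: algebra_simps)
  then obtain s'' where s'': "s'' \<in> S" "s''*(s*r - r'*x) = 0" using ld_den[OF S b] by blast
  then have "(s''*s)*r = (s''*r')*x" by (simp add: algebra_simps)
  then show "\<exists>s\<in>S. \<exists>r'. s*r = r'*x" using ld_mult[OF S s''(1) s(1)] by blast
next
  have S: "left_den S" using M by (rule max_ld)
  fix y assume "y*x \<in> ass S"
  then have "y*(x*b) \<in> ass S" using ass_mult_right by (metis mult.assoc)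
  then show "y \<in> ass S" using ass_right_reg[OF S xb] by blast
qed

lemma sat2:
  assumes M: "S \<in> maxDen_l" and b: "b \<in> S" and br: "b*r \<in> S"
  shows "r \<in> S"
proof (rule max_G[OF M])
  have S: "left_den S" using M by (rule max_ld)
  fix y
  obtain s z where s: "s \<in> S" "s*y = z*(b*r)" using ld_ore[OF S br] by blast
  then have "s*y = (z*b)*r" by (simp add: mult.assoc)
  then show "\<exists>s\<in>S. \<exists>r'. s*y = r'*r" using s(1) by blast
next
  have S: "left_den S" using M by (rule max_ld)
  fix y assume "y*r \<in> ass S"
  then obtain s where s: "s \<in> S" "s*(y*r) = 0" unfolding ass_def by blast
  obtain s1 w where s1: "s1 \<in> S" "s1*(s*y) = w*b" using ld_ore[OF S b] by blast
  have "w*(b*r) = s1*(s*(y*r))" using s1 by (metis mult.assoc)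
  then have "w*(b*r) = 0" using s by simp
  then obtain s2 where s2: "s2 \<in> S" "s2*w = 0" using ld_den[OF S br] by blast
  have "(s2*s1*s)*y = (s2*w)*b" using s1 by (metis mult.assoc)
  then have "(s2*s1*s)*y = 0" using s2 by simp
  moreover have "s2*s1*s \<in> S" using ld_mult[OF S] s s1 s2 by blast
  ultimately show "y \<in> ass S" unfolding ass_def by blast
qed

lemma unit_in_max:
  assumes M: "S \<in> maxDen_l" and u: "v*u = 1" "u*v = 1"
  shows "u \<in> S"
proof (rule max_G[OF M])
  have S: "left_den S" using M by (rule max_ld)
  fix r
  have "1*r = (r*v)*u" using u by (simp add: mult.assoc)
  then show "\<exists>s\<in>S. \<exists>r'. s*r = r'*u" using ld_1[OF S] by blast
next
  fix x assume "x*u \<in> ass S"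
  then have "x*u*v \<in> ass S" by (rule ass_mult_right)
  then show "x \<in> ass S" using u by (simp add: mult.assoc)
qed

lemma exists_max:
  assumes S0: "left_den (S0 :: 'a::ring_1 set)"
  shows "\<exists>M\<in>maxDen_l. S0 \<subseteq> M"
proof -
  define A where "A = {S. left_den S \<and> S0 \<subseteq> S}"
  have "\<forall>C\<in>chains A. \<exists>U\<in>A. \<forall>X\<in>C. X \<subseteq> U"
  proof
    fix C assume C: "C \<in> chains A"
    show "\<exists>U\<in>A. \<forall>X\<in>C. X \<subseteq> U"
    proof (cases "C = {}")
      case True then show ?thesis using S0 unfolding A_def by blast
    next
      case False
      have CA: "C \<subseteq> A" and ch: "\<And>X Y. X \<in> C \<Longrightarrow> Y \<in> C \<Longrightarrow> X \<subseteq> Y \<or> Y \<subseteq> X"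
        using C unfolding chains_def chain_subset_def by blast+
      have ldX: "\<And>X. X \<in> C \<Longrightarrow> left_den X" using CA unfolding A_def by blast
      have "left_den (\<Union>C)"
      proof (rule ld_intro)
        show "1 \<in> \<Union>C" using False ldX ld_1 by blast
        show "0 \<notin> \<Union>C" using ldX ld_0 by blast
      next
        fix a b assume "a \<in> \<Union>C" "b \<in> \<Union>C"
        then obtain X Y where "X \<in> C" "Y \<in> C" "a \<in> X" "b \<in> Y" by blast
        then show "a*b \<in> \<Union>C" using ch[of X Y] ldX ld_mult by blast
      next
        fix r s assume "s \<in> \<Union>C"
        then obtain X where X: "X \<in> C" "s \<in> X" by blast
        then show "\<exists>s'\<in>\<Union>C. \<exists>r'. s'*r = r'*s" using ld_ore[OF ldX[OF X(1)] X(2)] by blast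
      next
        fix r s assume "s \<in> \<Union>C" "r*s = 0"
        then obtain X where X: "X \<in> C" "s \<in> X" "r*s = 0" by blast
        then show "\<exists>t\<in>\<Union>C. t*r = 0" using ld_den[OF ldX[OF X(1)] X(2)] by blast
      qed
      moreover have "S0 \<subseteq> \<Union>C" using False CA unfolding A_def by blast
      ultimately show ?thesis unfolding A_def by blast
    qed
  qed
  then obtain M where M: "M \<in> A" "\<forall>X\<in>A. M \<subseteq> X \<longrightarrow> X = M" using Zorn_Lemma2 by blast
  have "M \<in> maxDen_l"
    using M unfolding A_def maxDen_l_def by blast
  then show ?thesis using M unfolding A_def by blast
qed

lemma T_sub_max:
  assumes T: "left_den T" and aT: "ass T = {0}" and M: "S \<in> maxDen_l"
  shows "T \<subseteq> S"
proof -
  have S: "left_den S" using M by (rule max_ld)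
  define V where "V = monoid_gen (S \<union> T)"
  have VS: "S \<subseteq> V" "T \<subseteq> V" unfolding V_def by (auto intro: monoid_gen.gen)
  have Vm: "a \<in> V \<Longrightarrow> b \<in> V \<Longrightarrow> a*b \<in> V" for a b unfolding V_def by (rule monoid_gen.mult)
  have P1: "\<forall>r. \<exists>v'\<in>V. \<exists>r'. v'*r = r'*v" if "v \<in> monoid_gen (S \<union> T)" for v
    using that
  proof (induction rule: monoid_gen.induct)
    case one then show ?case using VS ld_1[OF S] by (metis in_mono mult_1_left mult_1_right)
  next
    case (gen a) then show ?case using ld_ore[OF S] ld_ore[OF T] VS by blast
  next
    case (mult a b)
    show ?case
    proof
      fix r
      from mult.IH(2) obtain s1 r1 where s1: "s1 \<in> V" "s1*r = r1*b" by blast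
      from mult.IH(1) obtain s2 r2 where s2: "s2 \<in> V" "s2*r1 = r2*a" by blast
      have "(s2*s1)*r = r2*(a*b)" using s1 s2 by (metis mult.assoc)
      then show "\<exists>v'\<in>V. \<exists>r'. v'*r = r'*(a*b)" using Vm[OF s2(1) s1(1)] by blast
    qed
  qed
  have P2: "\<forall>r. r*v = 0 \<longrightarrow> (\<exists>w\<in>V. w*r = 0)" if "v \<in> monoid_gen (S \<union> T)" for v
    using that
  proof (induction rule: monoid_gen.induct)
    case one then show ?case using VS ld_1[OF S] by force
  next
    case (gen a) then show ?case using ld_den[OF S] ld_den[OF T] VS by blast
  next
    case (mult a b)
    show ?case
    proof (intro allI impI)
      fix r assume "r*(a*b) = 0"
      then have "(r*a)*b = 0" by (simp add: mult.assoc)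
      then obtain w where w: "w \<in> V" "w*(r*a) = 0" using mult.IH(2) by blast
      then have "(w*r)*a = 0" by (simp add: mult.assoc)
      then obtain w' where w': "w' \<in> V" "w'*(w*r) = 0" using mult.IH(1) by blast
      then show "\<exists>w\<in>V. w*r = 0" using Vm[OF w'(1) w(1)] by (metis mult.assoc)
    qed
  qed
  have Treg: "x \<in> ass S" if t: "t \<in> T" and xt: "x*t \<in> ass S" for x t
  proof -
    from xt obtain s where s: "s \<in> S" "s*(x*t) = 0" unfolding ass_def by blast
    then have "(s*x)*t = 0" by (simp add: mult.assoc)
    then obtain t' where "t' \<in> T" "t'*(s*x) = 0" using ld_den[OF T t] by blast
    then have "s*x \<in> ass T" unfolding ass_def by blast
    then have "s*x = 0" using aT by simp
    then show ?thesis using s unfolding ass_def by blast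
  qed
  have P3: "\<forall>x. x*v \<in> ass S \<longrightarrow> x \<in> ass S" if "v \<in> monoid_gen (S \<union> T)" for v
    using that
  proof (induction rule: monoid_gen.induct)
    case one then show ?case by simp
  next
    case (gen a) then show ?case using ass_right_reg[OF S] Treg by blast
  next
    case (mult a b) then show ?case by (metis mult.assoc)
  qed
  have "left_den V"
  proof (rule ld_intro)
    show "1 \<in> V" unfolding V_def by (rule monoid_gen.one)
    show "0 \<notin> V"
    proof
      assume "0 \<in> V"
      then have "1 \<in> ass S" using P3[of 0] zero_ass[OF S] unfolding V_def by simp
      then show False using one_notin_ass[OF S] by blast
    qed
  qed (use Vm P1 P2 V_def in auto)
  then have "V = S" using max_eq[OF M] VS by blast
  then show ?thesis using VS by blast
qed



locale ctx =
  fixes T :: "'a::ring_1 set" and \<sigma> :: "'a \<Rightarrow> 'b::ring_1"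
  assumes T: "left_den T" and aT: "ass T = {0}" and L: "is_left_localization T \<sigma>"
begin

lemma s1: "\<sigma> 1 = 1" using L by (simp add: is_left_localization_def is_ring_hom_def)
lemma s_add: "\<sigma> (x + y) = \<sigma> x + \<sigma> y" using L by (simp add: is_left_localization_def is_ring_hom_def)
lemma s_mult: "\<sigma> (x * y) = \<sigma> x * \<sigma> y" using L by (simp add: is_left_localization_def is_ring_hom_def)
lemma s0: "\<sigma> 0 = 0" using s_add[of 0 0] by simp
lemma s_diff: "\<sigma> (x - y) = \<sigma> x - \<sigma> y"
  using s_add[of "x - y" y] by (simp add: eq_diff_eq)
lemma s_inj: "\<sigma> x = \<sigma> y \<Longrightarrow> x = y"
proof -
  assume "\<sigma> x = \<sigma> y"
  then have "\<sigma> (x - y) = 0" by (simp add: s_diff)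
  then have "x - y \<in> ass T" using L unfolding is_left_localization_def by blast
  then show "x = y" using aT by simp
qed
lemma frac: "\<exists>t\<in>T. \<exists>r. \<sigma> t * q = \<sigma> r" using L unfolding is_left_localization_def by blast
lemma unitT: "t \<in> T \<Longrightarrow> \<exists>u. u * \<sigma> t = 1 \<and> \<sigma> t * u = 1"
  using L unfolding is_left_localization_def is_unit_def by blast

definition iv :: "'a \<Rightarrow> 'b" where "iv t = (SOME u. u * \<sigma> t = 1 \<and> \<sigma> t * u = 1)"
lemma iv: "t \<in> T \<Longrightarrow> iv t * \<sigma> t = 1 \<and> \<sigma> t * iv t = 1"
  unfolding iv_def by (rule someI_ex, rule unitT)
lemma ivl: "t \<in> T \<Longrightarrow> iv t * \<sigma> t = 1" using iv by blast
lemma ivr: "t \<in> T \<Longrightarrow> \<sigma> t * iv t = 1" using iv by blast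

lemma iv_gen: "t \<in> T \<Longrightarrow> iv t \<in> monoid_gen (\<sigma> ` S \<union> {u. \<exists>t\<in>T. u * \<sigma> t = 1 \<and> \<sigma> t * u = 1})"
  by (rule monoid_gen.gen) (use iv in blast)

definition W :: "'a set \<Rightarrow> 'b set" where "W S = {q. \<exists>t\<in>T. \<exists>s\<in>S. \<sigma> t * q = \<sigma> s}"

lemma frac_eq:
  assumes "t \<in> T" "\<sigma> t * q = x" shows "q = iv t * x"
proof -
  have "q = (iv t * \<sigma> t) * q" using ivl[OF assms(1)] by simp
  also have "\<dots> = iv t * x" using assms(2) by (simp add: mult.assoc)
  finally show ?thesis .
qed

lemma W_sub_tilde: "W S \<subseteq> tilde T \<sigma> S"
proof
  fix q assume "q \<in> W S"
  then obtain t s where ts: "t \<in> T" "s \<in> S" "\<sigma> t * q = \<sigma> s" unfolding W_def by blast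
  then have "q = iv t * \<sigma> s" using frac_eq[OF ts(1) ts(3)] by simp
  moreover have "\<sigma> s \<in> tilde T \<sigma> S" unfolding tilde_def by (rule monoid_gen.gen) (use ts in blast)
  ultimately show "q \<in> tilde T \<sigma> S" unfolding tilde_def using iv_gen[OF ts(1), of S] monoid_gen.mult by auto
qed

lemma tilde_W:
  assumes M: "S \<in> maxDen_l"
  shows "tilde T \<sigma> S = W S"
proof
  have TS: "T \<subseteq> S" using T_sub_max[OF T aT M] .
  have S: "left_den S" using M by (rule max_ld)
  show "tilde T \<sigma> S \<subseteq> W S"
  proof
    fix q assume "q \<in> tilde T \<sigma> S"
    then show "q \<in> W S" unfolding tilde_def
    proof (induction rule: monoid_gen.induct)
      case one then show ?case unfolding W_def using ld_1[OF T] ld_1[OF S] s1 by force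
    next
      case (gen a)
      then show ?case
      proof
        assume "a \<in> \<sigma> ` S"
        then show ?thesis unfolding W_def using ld_1[OF T] s1 by force
      next
        assume "a \<in> {u. \<exists>t\<in>T. u * \<sigma> t = 1 \<and> \<sigma> t * u = 1}"
        then show ?thesis unfolding W_def using ld_1[OF S] s1 by force
      qed
    next
      case (mult a b)
      from mult.IH(1) obtain t1 s1 where 1: "t1 \<in> T" "s1 \<in> S" "\<sigma> t1 * a = \<sigma> s1" unfolding W_def by blast
      from mult.IH(2) obtain t2 s2 where 2: "t2 \<in> T" "s2 \<in> S" "\<sigma> t2 * b = \<sigma> s2" unfolding W_def by blast
      obtain t3 x where 3: "t3 \<in> T" "t3 * s1 = x * t2" using ld_ore[OF T 2(1)] by blast
      have "x * t2 \<in> S" using 3 ld_mult[OF S] TS 1 by (metis subsetD)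
      then have xS: "x \<in> S" using sat1[OF M] TS 2(1) by blast
      have "\<sigma> (t3 * t1) * (a * b) = \<sigma> (x * s2)"
      proof -
        have "\<sigma> (t3 * t1) * (a * b) = \<sigma> t3 * (\<sigma> t1 * a) * b" by (simp add: s_mult mult.assoc)
        also have "\<dots> = \<sigma> (t3 * s1) * b" using 1 by (simp add: s_mult)
        also have "\<dots> = \<sigma> x * (\<sigma> t2 * b)" using 3 by (simp add: s_mult mult.assoc)
        also have "\<dots> = \<sigma> (x * s2)" using 2 by (simp add: s_mult)
        finally show ?thesis .
      qed
      moreover have "t3 * t1 \<in> T" using ld_mult[OF T] 1 3 by blast
      moreover have "x * s2 \<in> S" using ld_mult[OF S] xS 2 by blast
      ultimately show ?case unfolding W_def by blast
    qed
  qed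
  show "W S \<subseteq> tilde T \<sigma> S" by (rule W_sub_tilde)
qed

lemma preim_W:
  assumes M: "S \<in> maxDen_l"
  shows "\<sigma> -` W S = S"
proof
  have TS: "T \<subseteq> S" using T_sub_max[OF T aT M] .
  have S: "left_den S" using M by (rule max_ld)
  show "\<sigma> -` W S \<subseteq> S"
  proof
    fix r assume "r \<in> \<sigma> -` W S"
    then obtain t s where "t \<in> T" "s \<in> S" "\<sigma> t * \<sigma> r = \<sigma> s" unfolding W_def by blast
    then have "t * r = s" "t \<in> S" using s_inj s_mult TS by auto
    then show "r \<in> S" using sat2[OF M] \<open>s \<in> S\<close> by blast
  qed
  show "S \<subseteq> \<sigma> -` W S" unfolding W_def using ld_1[OF T] s1 by force
qed

lemma preim_den:
  assumes V: "left_den V" and TV: "\<sigma> ` T \<subseteq> V"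
  shows "left_den (\<sigma> -` V)"
proof (rule ld_intro)
  show "1 \<in> \<sigma> -` V" using ld_1[OF V] s1 by simp
  show "0 \<notin> \<sigma> -` V" using ld_0[OF V] s0 by simp
next
  fix a b assume "a \<in> \<sigma> -` V" "b \<in> \<sigma> -` V"
  then show "a * b \<in> \<sigma> -` V" using ld_mult[OF V] s_mult by simp
next
  fix r a assume a: "a \<in> \<sigma> -` V"
  obtain v q where vq: "v \<in> V" "v * \<sigma> r = q * \<sigma> a" using ld_ore[OF V] a by blast
  obtain t1 y where ty: "t1 \<in> T" "\<sigma> t1 * v = \<sigma> y" using frac by blast
  obtain t2 z where tz: "t2 \<in> T" "\<sigma> t2 * (\<sigma> t1 * q) = \<sigma> z" using frac by blast
  have "\<sigma> (t2 * y * r) = \<sigma> (z * a)"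
  proof -
    have "\<sigma> (t2 * y * r) = \<sigma> t2 * (\<sigma> y * \<sigma> r)" by (simp add: s_mult mult.assoc)
    also have "\<dots> = \<sigma> t2 * ((\<sigma> t1 * v) * \<sigma> r)" using ty by simp
    also have "\<dots> = \<sigma> t2 * (\<sigma> t1 * (v * \<sigma> r))"  by (simp add: mult.assoc)
    also have "\<dots> = (\<sigma> t2 * (\<sigma> t1 * q)) * \<sigma> a" using vq by (simp add: mult.assoc)
    also have "\<dots> = \<sigma> (z * a)" using tz by (simp add: s_mult)
    finally show ?thesis .
  qed
  then have "(t2 * y) * r = z * a" using s_inj by blast
  moreover have "t2 * y \<in> \<sigma> -` V"
  proof -
    have "\<sigma> y \<in> V" using ty TV vq ld_mult[OF V] by (metis image_subset_iff)
    then show ?thesis using TV tz ld_mult[OF V] s_mult by (simp add: image_subset_iff)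
  qed
  ultimately show "\<exists>s'\<in>\<sigma> -` V. \<exists>r'. s' * r = r' * a" by blast
next
  fix r a assume a: "a \<in> \<sigma> -` V" and ra: "r * a = 0"
  then have "\<sigma> r * \<sigma> a = 0" using s_mult s0 by metis
  then obtain v where v: "v \<in> V" "v * \<sigma> r = 0" using ld_den[OF V] a by blast
  obtain t1 y where ty: "t1 \<in> T" "\<sigma> t1 * v = \<sigma> y" using frac by blast
  have "\<sigma> (y * r) = \<sigma> 0" using ty v by (metis mult.assoc mult_zero_right s0 s_mult)
  then have "y * r = 0" using s_inj by blast
  moreover have "\<sigma> y \<in> V" using ty TV v ld_mult[OF V] by (metis image_subset_iff)
  ultimately show "\<exists>t\<in>\<sigma> -` V. t * r = 0" by blast
qed

end


lemma monoid_gen_mono: "A \<subseteq> B \<Longrightarrow> monoid_gen A \<subseteq> monoid_gen B"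
proof
  fix x assume AB: "A \<subseteq> B" and x: "x \<in> monoid_gen A"
  from x show "x \<in> monoid_gen B"
    by (induction rule: monoid_gen.induct) (use AB in \<open>auto intro: monoid_gen.intros\<close>)
qed

context ctx
begin

lemma W_den:
  assumes M: "S \<in> maxDen_l"
  shows "left_den (W S)"
proof (rule ld_intro)
  have TS: "T \<subseteq> S" using T_sub_max[OF T aT M] .
  have S: "left_den S" using M by (rule max_ld)
  show "1 \<in> W S" unfolding W_def using ld_1[OF T] ld_1[OF S] s1 by force
  show "0 \<notin> W S"
  proof
    assume "0 \<in> W S"
    then obtain t s where "s \<in> S" "\<sigma> t * 0 = \<sigma> s" unfolding W_def by blast
    then have "s \<in> S" "\<sigma> s = \<sigma> 0" using s0 by auto
    then show False using s_inj ld_0[OF S] by blast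
  qed
next
  fix a b assume "a \<in> W S" "b \<in> W S"
  then have "a \<in> tilde T \<sigma> S" "b \<in> tilde T \<sigma> S" using tilde_W[OF M] by auto
  then have "a * b \<in> tilde T \<sigma> S" unfolding tilde_def by (rule monoid_gen.mult)
  then show "a * b \<in> W S" using tilde_W[OF M] by simp
next
  have TS: "T \<subseteq> S" using T_sub_max[OF T aT M] .
  have S: "left_den S" using M by (rule max_ld)
  fix q w assume "w \<in> W S"
  then obtain t s where ts: "t \<in> T" "s \<in> S" "\<sigma> t * w = \<sigma> s" unfolding W_def by blast
  obtain t1 r1 where tr: "t1 \<in> T" "\<sigma> t1 * q = \<sigma> r1" using frac by blast
  obtain s' r' where sr: "s' \<in> S" "s' * r1 = r' * s" using ld_ore[OF S ts(2)] by blast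
  have "\<sigma> (s' * t1) * q = (\<sigma> r' * \<sigma> t) * w"
  proof -
    have "\<sigma> (s' * t1) * q = \<sigma> s' * (\<sigma> t1 * q)" by (simp add: s_mult mult.assoc)
    also have "\<dots> = \<sigma> (s' * r1)" using tr by (simp add: s_mult)
    also have "\<dots> = \<sigma> r' * \<sigma> s" using sr by (simp add: s_mult)
    also have "\<dots> = (\<sigma> r' * \<sigma> t) * w" using ts by (simp add: mult.assoc)
    finally show ?thesis .
  qed
  moreover have "\<sigma> (s' * t1) \<in> W S"
  proof -
    have "s' * t1 \<in> S" using ld_mult[OF S] sr tr TS by blast
    then show ?thesis unfolding W_def using ld_1[OF T] s1 by force
  qed
  ultimately show "\<exists>s'\<in>W S. \<exists>r'. s' * q = r' * w" by blast
next
  have TS: "T \<subseteq> S" using T_sub_max[OF T aT M] .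
  have S: "left_den S" using M by (rule max_ld)
  fix q w assume "w \<in> W S" and qw: "q * w = 0"
  then obtain t s where ts: "t \<in> T" "s \<in> S" "\<sigma> t * w = \<sigma> s" unfolding W_def by blast
  have w: "w = iv t * \<sigma> s" using frac_eq[OF ts(1) ts(3)] .
  obtain t2 x where tx: "t2 \<in> T" "\<sigma> t2 * (q * iv t) = \<sigma> x" using frac by blast
  have "\<sigma> (x * s) = \<sigma> 0"
  proof -
    have "\<sigma> (x * s) = \<sigma> t2 * (q * iv t) * \<sigma> s" using tx by (simp add: s_mult)
    also have "\<dots> = \<sigma> t2 * (q * w)" using w by (simp add: mult.assoc)
    finally show ?thesis using qw s0 by simp
  qed
  then have "x * s = 0" using s_inj by blast
  then obtain s' where s': "s' \<in> S" "s' * x = 0" using ld_den[OF S ts(2)] by blast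
  have "\<sigma> (s' * t2) * q = 0"
  proof -
    have "\<sigma> (s' * t2) * q = \<sigma> s' * (\<sigma> t2 * q * 1)" by (simp add: s_mult mult.assoc)
    also have "\<dots> = \<sigma> s' * (\<sigma> t2 * q * (iv t * \<sigma> t))" using ivl[OF ts(1)] by simp
    also have "\<dots> = \<sigma> s' * (\<sigma> t2 * (q * iv t)) * \<sigma> t" by (simp add: mult.assoc)
    also have "\<dots> = \<sigma> (s' * x) * \<sigma> t" using tx by (simp add: s_mult)
    finally show ?thesis using s' s0 by simp
  qed
  moreover have "\<sigma> (s' * t2) \<in> W S"
  proof -
    have "s' * t2 \<in> S" using ld_mult[OF S] s' tx TS by blast
    then show ?thesis unfolding W_def using ld_1[OF T] s1 by force
  qed
  ultimately show "\<exists>t\<in>W S. t * q = 0" by blast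
qed

lemma W_max:
  assumes M: "S \<in> maxDen_l"
  shows "W S \<in> maxDen_l"
proof (rule maxI[OF W_den[OF M]])
  have TS: "T \<subseteq> S" using T_sub_max[OF T aT M] .
  have S: "left_den S" using M by (rule max_ld)
  fix V assume V: "left_den V" and WV: "W S \<subseteq> V"
  have sW: "s \<in> S \<Longrightarrow> \<sigma> s \<in> W S" for s unfolding W_def using ld_1[OF T] s1 by force
  have TV: "\<sigma> ` T \<subseteq> V" using sW TS WV by blast
  have "\<sigma> -` V = S"
    using max_eq[OF M preim_den[OF V TV]] sW WV by blast
  show "V \<subseteq> W S"
  proof
    fix v assume v: "v \<in> V"
    obtain t r where tr: "t \<in> T" "\<sigma> t * v = \<sigma> r" using frac by blast
    have "\<sigma> r \<in> V" using tr TV v ld_mult[OF V] by (metis image_subset_iff)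
    then have "r \<in> S" using \<open>\<sigma> -` V = S\<close> by blast
    then show "v \<in> W S" unfolding W_def using tr by blast
  qed
qed

lemma part4:
  assumes MT: "\<T> \<in> (maxDen_l :: 'b set set)"
  shows "\<sigma> -` \<T> \<in> maxDen_l \<and> tilde T \<sigma> (\<sigma> -` \<T>) = \<T>"
proof -
  have LT: "left_den \<T>" using MT by (rule max_ld)
  have TT: "\<sigma> ` T \<subseteq> \<T>" using unit_in_max[OF MT] ivl ivr by blast
  have iT: "u \<in> \<T>" if "t \<in> T" "u * \<sigma> t = 1" "\<sigma> t * u = 1" for t u
    using unit_in_max[OF MT] that by blast
  define S' where "S' = \<sigma> -` \<T>"
  have LS': "left_den S'" unfolding S'_def using preim_den[OF LT TT] .
  have tilde_eq: "tilde T \<sigma> S' = \<T>"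
  proof
    show "tilde T \<sigma> S' \<subseteq> \<T>"
    proof
      fix q assume "q \<in> tilde T \<sigma> S'"
      then show "q \<in> \<T>" unfolding tilde_def
      proof (induction rule: monoid_gen.induct)
        case one then show ?case using ld_1[OF LT] .
      next
        case (gen a) then show ?case using iT unfolding S'_def by blast
      next
        case (mult a b) then show ?case using ld_mult[OF LT] by blast
      qed
    qed
    show "\<T> \<subseteq> tilde T \<sigma> S'"
    proof
      fix q assume q: "q \<in> \<T>"
      obtain t r where tr: "t \<in> T" "\<sigma> t * q = \<sigma> r" using frac by blast
      have "\<sigma> r \<in> \<T>" using tr TT q ld_mult[OF LT] by (metis image_subset_iff)
      then have "q \<in> W S'" unfolding W_def S'_def using tr by blast
      then show "q \<in> tilde T \<sigma> S'" using W_sub_tilde by blast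
    qed
  qed
  have "S' \<in> maxDen_l"
  proof (rule maxI[OF LS'])
    fix S'' assume L'': "left_den S''" and sub: "S' \<subseteq> S''"
    obtain M where M: "M \<in> maxDen_l" "S'' \<subseteq> M" using exists_max[OF L''] by blast
    have "tilde T \<sigma> S' \<subseteq> tilde T \<sigma> M"
      unfolding tilde_def using sub M(2) by (intro monoid_gen_mono) blast
    then have "\<T> \<subseteq> W M" using tilde_eq tilde_W[OF M(1)] by simp
    then have "W M = \<T>" using max_eq[OF MT W_den[OF M(1)]] by blast
    then have "M = S'" using preim_W[OF M(1)] unfolding S'_def by simp
    then show "S'' \<subseteq> S'" using M(2) by simp
  qed
  then show ?thesis using tilde_eq unfolding S'_def by simp
qed

end


lemma hom_1: "is_ring_hom f \<Longrightarrow> f 1 = 1" by (simp add: is_ring_hom_def)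
lemma hom_add: "is_ring_hom f \<Longrightarrow> f (x + y) = f x + f y" by (simp add: is_ring_hom_def)
lemma hom_mult: "is_ring_hom f \<Longrightarrow> f (x * y) = f x * f y" by (simp add: is_ring_hom_def)
lemma hom_0: "is_ring_hom f \<Longrightarrow> f 0 = 0" using hom_add[of f 0 0] by simp
lemma hom_diff: "is_ring_hom f \<Longrightarrow> f (x - y) = f x - f y"
  using hom_add[of f "x - y" y] by (simp add: eq_diff_eq)
lemma hom_comp: "is_ring_hom f \<Longrightarrow> is_ring_hom g \<Longrightarrow> is_ring_hom (g \<circ> f)"
  by (simp add: is_ring_hom_def)

lemma unit_cancel: "is_unit a \<Longrightarrow> a * x = a * y \<Longrightarrow> x = y"
  unfolding is_unit_def by (metis mult.assoc mult_1_left)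

lemma unit_mult: "is_unit a \<Longrightarrow> is_unit b \<Longrightarrow> is_unit (a * b)"
  unfolding is_unit_def
proof -
  assume "\<exists>v. v * a = 1 \<and> a * v = 1" "\<exists>v. v * b = 1 \<and> b * v = 1"
  then obtain u v where "u * a = 1" "a * u = 1" "v * b = 1" "b * v = 1" by blast
  then have "(v * u) * (a * b) = 1 \<and> (a * b) * (v * u) = 1"
    by (metis mult.assoc mult_1_left)
  then show "\<exists>w. w * (a * b) = 1 \<and> a * b * w = 1" by blast
qed

lemma UP:
  fixes l :: "'a::ring_1 \<Rightarrow> 'c::ring_1" and f :: "'a \<Rightarrow> 'e::ring_1"
  assumes L1: "is_left_localization S l"
    and f: "is_ring_hom f" and fu: "\<forall>s\<in>S. is_unit (f s)"
  shows "\<exists>\<phi>. is_ring_hom \<phi> \<and> (\<forall>r. \<phi> (l r) = f r)"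
proof -
  have S: "left_den S" and l: "is_ring_hom l" and lfr: "\<And>c. \<exists>s\<in>S. \<exists>r. l s * c = l r"
    and lker: "{r. l r = 0} = ass S"
    using L1 unfolding is_left_localization_def by blast+
  define fi where "fi a = (SOME v. v * a = 1 \<and> a * v = 1)" for a :: 'e
  have fi: "fi a * a = 1 \<and> a * fi a = 1" if "is_unit a" for a
    unfolding fi_def using that unfolding is_unit_def by (rule someI_ex)
  define rep where "rep c = (SOME p. fst p \<in> S \<and> l (fst p) * c = l (snd p))" for c
  have rep: "fst (rep c) \<in> S \<and> l (fst (rep c)) * c = l (snd (rep c))" for c
  proof -
    obtain s r where "s \<in> S" "l s * c = l r" using lfr by blast
    then have "\<exists>p. fst p \<in> S \<and> l (fst p) * c = l (snd p)" by (intro exI[of _ "(s, r)"]) simp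
    then show ?thesis unfolding rep_def by (rule someI_ex)
  qed
  define \<phi> where "\<phi> c = fi (f (fst (rep c))) * f (snd (rep c))" for c
  have CH: "f s * \<phi> c = f r" if s: "s \<in> S" and sc: "l s * c = l r" for s r c
  proof -
    define s0 r0 where "s0 = fst (rep c)" and "r0 = snd (rep c)"
    have s0: "s0 \<in> S" "l s0 * c = l r0" using rep unfolding s0_def r0_def by blast+
    have p0: "f s0 * \<phi> c = f r0"
      unfolding \<phi>_def s0_def[symmetric] r0_def[symmetric]
      using fi[of "f s0"] fu s0(1) by (simp add: mult.assoc[symmetric])
    obtain a b where ab: "a \<in> S" "a * s = b * s0" using ld_ore[OF S s0(1)] by blast
    have "l (a * r) = l (b * r0)"
    proof -
      have "l (a * r) = l a * (l s * c)" using sc by (simp add: hom_mult[OF l])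
      also have "\<dots> = l (a * s) * c" by (simp add: hom_mult[OF l] mult.assoc)
      also have "\<dots> = l b * (l s0 * c)" using ab by (simp add: hom_mult[OF l] mult.assoc)
      also have "\<dots> = l (b * r0)" using s0 by (simp add: hom_mult[OF l])
      finally show ?thesis .
    qed
    then have "l (a * r - b * r0) = 0" by (simp add: hom_diff[OF l])
    then have "a * r - b * r0 \<in> ass S" using lker by blast
    then obtain e where e: "e \<in> S" "e * (a * r - b * r0) = 0" unfolding ass_def by blast
    then have "f e * f (a * r - b * r0) = f e * 0" by (simp add: hom_mult[OF f, symmetric] hom_0[OF f])
    then have "f (a * r - b * r0) = 0" using unit_cancel fu e(1) by blast
    then have far: "f (a * r) = f (b * r0)" by (simp add: hom_diff[OF f])
    have "f a * (f s * \<phi> c) = f a * f r"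
    proof -
      have "f a * (f s * \<phi> c) = f (a * s) * \<phi> c" by (simp add: hom_mult[OF f] mult.assoc)
      also have "\<dots> = f b * (f s0 * \<phi> c)" using ab by (simp add: hom_mult[OF f] mult.assoc)
      also have "\<dots> = f (b * r0)" using p0 by (simp add: hom_mult[OF f])
      also have "\<dots> = f a * f r" using far by (simp add: hom_mult[OF f])
      finally show ?thesis .
    qed
    then show ?thesis using unit_cancel fu ab(1) by blast
  qed
  have lf: "\<phi> (l r) = f r" for r
    using CH[of 1 "l r" r] ld_1[OF S] by (simp add: hom_1[OF l] hom_1[OF f])
  have hadd: "\<phi> (c1 + c2) = \<phi> c1 + \<phi> c2" for c1 c2
  proof -
    obtain s1 r1 where 1: "s1 \<in> S" "l s1 * c1 = l r1" using lfr by blast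
    obtain s2 r2 where 2: "s2 \<in> S" "l s2 * c2 = l r2" using lfr by blast
    obtain a b where ab: "a \<in> S" "a * s1 = b * s2" using ld_ore[OF S 2(1)] by blast
    have as1: "a * s1 \<in> S" using ld_mult[OF S] ab 1 by blast
    have "l (a * s1) * (c1 + c2) = l (a * r1 + b * r2)"
    proof -
      have "l (a * s1) * (c1 + c2) = l a * (l s1 * c1) + l (a * s1) * c2"
        by (simp add: hom_mult[OF l] mult.assoc distrib_left)
      also have "\<dots> = l a * l r1 + l b * (l s2 * c2)" using 1 ab by (simp add: hom_mult[OF l] mult.assoc)
      also have "\<dots> = l (a * r1 + b * r2)" using 2 by (simp add: hom_mult[OF l] hom_add[OF l])
      finally show ?thesis .
    qed
    then have e1: "f (a * s1) * \<phi> (c1 + c2) = f (a * r1 + b * r2)" using CH as1 by blast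
    have "f (a * r1 + b * r2) = f a * (f s1 * \<phi> c1) + f b * (f s2 * \<phi> c2)"
      using CH[OF 1] CH[OF 2] by (simp add: hom_mult[OF f] hom_add[OF f])
    also have "\<dots> = f (a * s1) * \<phi> c1 + f (b * s2) * \<phi> c2" by (simp add: hom_mult[OF f] mult.assoc)
    also have "\<dots> = f (a * s1) * (\<phi> c1 + \<phi> c2)" using ab by (simp add: distrib_left)
    finally show ?thesis using e1 unit_cancel fu as1 by metis
  qed
  have hmult: "\<phi> (c1 * c2) = \<phi> c1 * \<phi> c2" for c1 c2
  proof -
    obtain s1 r1 where 1: "s1 \<in> S" "l s1 * c1 = l r1" using lfr by blast
    obtain s2 r2 where 2: "s2 \<in> S" "l s2 * c2 = l r2" using lfr by blast
    obtain a b where ab: "a \<in> S" "a * r1 = b * s2" using ld_ore[OF S 2(1)] by blast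
    have as1: "a * s1 \<in> S" using ld_mult[OF S] ab 1 by blast
    have "l (a * s1) * (c1 * c2) = l (b * r2)"
    proof -
      have "l (a * s1) * (c1 * c2) = l a * (l s1 * c1) * c2" by (simp add: hom_mult[OF l] mult.assoc)
      also have "\<dots> = l (a * r1) * c2" using 1 by (simp add: hom_mult[OF l])
      also have "\<dots> = l b * (l s2 * c2)" using ab by (simp add: hom_mult[OF l] mult.assoc)
      also have "\<dots> = l (b * r2)" using 2 by (simp add: hom_mult[OF l])
      finally show ?thesis .
    qed
    then have e1: "f (a * s1) * \<phi> (c1 * c2) = f (b * r2)" using CH as1 by blast
    have "f (b * r2) = f b * (f s2 * \<phi> c2)" using CH[OF 2] by (simp add: hom_mult[OF f])
    also have "\<dots> = f (a * r1) * \<phi> c2" using ab by (simp add: hom_mult[OF f] mult.assoc)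
    also have "\<dots> = f a * (f s1 * \<phi> c1) * \<phi> c2" using CH[OF 1] by (simp add: hom_mult[OF f])
    also have "\<dots> = f (a * s1) * (\<phi> c1 * \<phi> c2)" by (simp add: hom_mult[OF f] mult.assoc)
    finally show ?thesis using e1 unit_cancel fu as1 by metis
  qed
  have "\<phi> 1 = 1" using lf[of 1] by (simp add: hom_1[OF l] hom_1[OF f])
  then have "is_ring_hom \<phi>" unfolding is_ring_hom_def using hadd hmult by blast
  then show ?thesis using lf by blast
qed

lemma UP_uniq:
  fixes l :: "'a::ring_1 \<Rightarrow> 'c::ring_1"
  assumes L1: "is_left_localization S l" and g: "is_ring_hom g" and gl: "\<And>r. g (l r) = l r"
  shows "g c = c"
proof -
  have l: "is_ring_hom l" and lu: "\<forall>s\<in>S. is_unit (l s)" and lfr: "\<And>c. \<exists>s\<in>S. \<exists>r. l s * c = l r"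
    using L1 unfolding is_left_localization_def by blast+
  obtain s r where sr: "s \<in> S" "l s * c = l r" using lfr by blast
  then have "g (l s) * g c = g (l r)" by (metis hom_mult[OF g])
  then have "l s * g c = l s * c" using gl sr by simp
  then show ?thesis using unit_cancel lu sr(1) by blast
qed

lemma loc_iso:
  fixes l1 :: "'a::ring_1 \<Rightarrow> 'c::ring_1" and l2 :: "'a \<Rightarrow> 'd::ring_1"
  assumes L1: "is_left_localization S l1" and L2: "is_left_localization S l2"
  shows "\<exists>\<phi> :: 'c \<Rightarrow> 'd. is_ring_hom \<phi> \<and> bij \<phi>"
proof -
  have h1: "is_ring_hom l1" and u1: "\<forall>s\<in>S. is_unit (l1 s)"
    using L1 unfolding is_left_localization_def by blast+
  have h2: "is_ring_hom l2" and u2: "\<forall>s\<in>S. is_unit (l2 s)"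
    using L2 unfolding is_left_localization_def by blast+
  obtain \<phi> :: "'c \<Rightarrow> 'd" where p: "is_ring_hom \<phi>" "\<forall>r. \<phi> (l1 r) = l2 r" using UP[OF L1 h2 u2] by blast
  obtain \<psi> :: "'d \<Rightarrow> 'c" where q: "is_ring_hom \<psi>" "\<forall>r. \<psi> (l2 r) = l1 r" using UP[OF L2 h1 u1] by blast
  have a: "\<psi> (\<phi> c) = c" for c
    using UP_uniq[OF L1 hom_comp[OF p(1) q(1)]] p q by simp
  have b: "\<phi> (\<psi> d) = d" for d
    using UP_uniq[OF L2 hom_comp[OF q(1) p(1)]] p q by simp
  have "bij \<phi>" unfolding bij_def inj_def surj_def using a b by metis
  then show ?thesis using p by blast
qed

context ctx
begin

lemma comp_loc:
  assumes M: "S \<in> maxDen_l" and L2: "is_left_localization (tilde T \<sigma> S) (\<sigma>2 :: 'b \<Rightarrow> 'd::ring_1)"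
  shows "is_left_localization S (\<sigma>2 \<circ> \<sigma>)"
proof -
  have TS: "T \<subseteq> S" using T_sub_max[OF T aT M] .
  have S: "left_den S" using M by (rule max_ld)
  have L2': "is_left_localization (W S) \<sigma>2" using L2 tilde_W[OF M] by simp
  have h2: "is_ring_hom \<sigma>2" and u2: "\<forall>w\<in>W S. is_unit (\<sigma>2 w)"
    and fr2: "\<And>d. \<exists>w\<in>W S. \<exists>q. \<sigma>2 w * d = \<sigma>2 q" and k2: "{q. \<sigma>2 q = 0} = ass (W S)"
    using L2' unfolding is_left_localization_def by blast+
  have hs: "is_ring_hom \<sigma>" using L unfolding is_left_localization_def by blast
  have sW: "s \<in> S \<Longrightarrow> \<sigma> s \<in> W S" for s unfolding W_def using ld_1[OF T] s1 by force
  have hom: "is_ring_hom (\<sigma>2 \<circ> \<sigma>)" by (rule hom_comp[OF hs h2])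
  have units: "\<forall>s\<in>S. is_unit ((\<sigma>2 \<circ> \<sigma>) s)" using u2 sW by simp
  have fr: "\<exists>s\<in>S. \<exists>r. (\<sigma>2 \<circ> \<sigma>) s * d = (\<sigma>2 \<circ> \<sigma>) r" for d
  proof -
    obtain w q where wq: "w \<in> W S" "\<sigma>2 w * d = \<sigma>2 q" using fr2 by blast
    obtain t s where ts: "t \<in> T" "s \<in> S" "\<sigma> t * w = \<sigma> s" using wq(1) unfolding W_def by blast
    obtain t1 r where tr: "t1 \<in> T" "\<sigma> t1 * q = \<sigma> r" using frac by blast
    obtain t3 x where tx: "t3 \<in> T" "\<sigma> t3 * (\<sigma> t1 * iv t) = \<sigma> x" using frac by blast
    have "\<sigma> (x * t) = \<sigma> (t3 * t1)"
    proof -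
      have "\<sigma> (x * t) = \<sigma> t3 * (\<sigma> t1 * iv t) * \<sigma> t" using tx by (simp add: s_mult)
      also have "\<dots> = \<sigma> t3 * \<sigma> t1 * (iv t * \<sigma> t)" by (simp add: mult.assoc)
      also have "\<dots> = \<sigma> (t3 * t1)" using ivl[OF ts(1)] by (simp add: s_mult)
      finally show ?thesis .
    qed
    then have "x * t = t3 * t1" using s_inj by blast
    then have "x * t \<in> S" using ld_mult[OF T tx(1) tr(1)] TS by auto
    then have xS: "x \<in> S" using sat1[OF M] TS ts(1) by blast
    have sx: "\<sigma> (x * s) = \<sigma> (t3 * t1) * w"
    proof -
      have "\<sigma> (x * s) = \<sigma> t3 * (\<sigma> t1 * iv t) * (\<sigma> t * w)" using tx ts by (simp add: s_mult)
      also have "\<dots> = \<sigma> t3 * \<sigma> t1 * (iv t * \<sigma> t) * w" by (simp add: mult.assoc)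
      also have "\<dots> = \<sigma> (t3 * t1) * w" using ivl[OF ts(1)] by (simp add: s_mult)
      finally show ?thesis .
    qed
    have "\<sigma>2 (\<sigma> (x * s)) * d = \<sigma>2 (\<sigma> (t3 * r))"
    proof -
      have "\<sigma>2 (\<sigma> (x * s)) * d = \<sigma>2 (\<sigma> (t3 * t1)) * (\<sigma>2 w * d)" using sx by (simp add: hom_mult[OF h2] mult.assoc)
      also have "\<dots> = \<sigma>2 (\<sigma> t3 * (\<sigma> t1 * q))" using wq by (simp add: hom_mult[OF h2] s_mult mult.assoc)
      also have "\<dots> = \<sigma>2 (\<sigma> (t3 * r))" using tr by (simp add: s_mult)
      finally show ?thesis .
    qed
    moreover have "x * s \<in> S" using ld_mult[OF S xS ts(2)] .
    ultimately show ?thesis by auto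
  qed
  have ker: "{r. (\<sigma>2 \<circ> \<sigma>) r = 0} = ass S"
  proof
    show "{r. (\<sigma>2 \<circ> \<sigma>) r = 0} \<subseteq> ass S"
    proof
      fix r assume "r \<in> {r. (\<sigma>2 \<circ> \<sigma>) r = 0}"
      then have "\<sigma> r \<in> ass (W S)" using k2 by auto
      then obtain w where w: "w \<in> W S" "w * \<sigma> r = 0" unfolding ass_def by blast
      obtain t s where ts: "t \<in> T" "s \<in> S" "\<sigma> t * w = \<sigma> s" using w(1) unfolding W_def by blast
      have "\<sigma> (s * r) = \<sigma> 0" using ts w by (metis mult.assoc mult_zero_right s0 s_mult)
      then have "s * r = 0" using s_inj by blast
      then show "r \<in> ass S" using ts unfolding ass_def by blast
    qed
    show "ass S \<subseteq> {r. (\<sigma>2 \<circ> \<sigma>) r = 0}"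
    proof
      fix r assume "r \<in> ass S"
      then obtain s where s: "s \<in> S" "s * r = 0" unfolding ass_def by blast
      then have "\<sigma> s * \<sigma> r = 0" by (metis s0 s_mult)
      then have "\<sigma> r \<in> ass (W S)" using sW[OF s(1)] unfolding ass_def by blast
      then show "r \<in> {r. (\<sigma>2 \<circ> \<sigma>) r = 0}" using k2 by auto
    qed
  qed
  show ?thesis unfolding is_left_localization_def using S hom units fr ker by blast
qed

end

theorem theorem3p11:
  fixes T :: "'a::ring_1 set" and \<sigma> :: "'a \<Rightarrow> 'b::ring_1"
  assumes "left_den T" and "ass T = {0}"
    and "is_left_localization T \<sigma>"
  shows "(\<forall>S\<in>maxDen_l. T \<subseteq> S)
    \<and> bij_betw (tilde T \<sigma>) (maxDen_l :: 'a set set) (maxDen_l :: 'b set set)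
    \<and> (\<forall>S\<in>(maxDen_l :: 'a set set). \<sigma> -` (tilde T \<sigma> S) = S)
    \<and> (\<forall>\<T>\<in>(maxDen_l :: 'b set set). \<sigma> -` \<T> \<in> maxDen_l \<and> tilde T \<sigma> (\<sigma> -` \<T>) = \<T>)
    \<and> (\<forall>S\<in>(maxDen_l :: 'a set set). \<forall>(\<sigma>1 :: 'a \<Rightarrow> 'c::ring_1) (\<sigma>2 :: 'b \<Rightarrow> 'd::ring_1).
         is_left_localization S \<sigma>1 \<longrightarrow> is_left_localization (tilde T \<sigma> S) \<sigma>2 \<longrightarrow>
         (\<exists>\<phi> :: 'c \<Rightarrow> 'd. is_ring_hom \<phi> \<and> bij \<phi>))"
proof -
  interpret ctx T \<sigma> using assms by unfold_locales
  have p1: "\<forall>S\<in>maxDen_l. T \<subseteq> S" using T_sub_max[OF T aT] by blast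
  have p3: "\<forall>S\<in>(maxDen_l :: 'a set set). \<sigma> -` (tilde T \<sigma> S) = S"
    using tilde_W preim_W by simp
  have p4: "\<forall>\<T>\<in>(maxDen_l :: 'b set set). \<sigma> -` \<T> \<in> maxDen_l \<and> tilde T \<sigma> (\<sigma> -` \<T>) = \<T>"
    using part4 by blast
  have p2: "bij_betw (tilde T \<sigma>) (maxDen_l :: 'a set set) (maxDen_l :: 'b set set)"
    unfolding bij_betw_def
  proof
    show "inj_on (tilde T \<sigma>) maxDen_l" using p3 by (metis inj_onI)
    show "tilde T \<sigma> ` maxDen_l = maxDen_l"
    proof
      show "tilde T \<sigma> ` maxDen_l \<subseteq> maxDen_l" using tilde_W W_max by auto
      show "maxDen_l \<subseteq> tilde T \<sigma> ` maxDen_l" using p4 by (metis image_eqI subsetI)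
    qed
  qed
  have p5: "\<forall>S\<in>(maxDen_l :: 'a set set). \<forall>(\<sigma>1 :: 'a \<Rightarrow> 'c::ring_1) (\<sigma>2 :: 'b \<Rightarrow> 'd::ring_1).
         is_left_localization S \<sigma>1 \<longrightarrow> is_left_localization (tilde T \<sigma> S) \<sigma>2 \<longrightarrow>
         (\<exists>\<phi> :: 'c \<Rightarrow> 'd. is_ring_hom \<phi> \<and> bij \<phi>)"
    using loc_iso comp_loc by blast
  show ?thesis using p1 p2 p3 p4 p5 by blast
qed


end
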